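(* Let $c>0$, $0<\lambda\le T_M$, and let $f\in C^2(\mathbb R)$ solve $$f''(y)-cf'(y)-f^4(y)=-\int_{-\infty}^\infty E(y-\eta)f^4(\eta)\,d\eta\ (y\in\mathbb R),\qquad 0<\lambda\le f\le T_M.$$ Then $f$ does not attain its supremum nor its infimum over $\mathbb R$ at any point of $\mathbb R$, unless $f$ is constant.
   Context: $E(x)=\frac12\int_{|x|}^\infty\frac{e^{-t}}{t}dt$, which satisfies $\int_{\mathbb R}E=1$. *)

theory Defs
  imports "HOL-Analysis.Analysis"
begin

text \<open>The kernel E(x) = 1/2 * integral from |x| to infinity of exp(-t)/t dt
  (Henstock-Kurzweil integral; the value at x = 0, where the integral diverges,
  is irrelevant for the convolution).\<close>
definition E :: "real \<Rightarrow> real" where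
  "E x = (1/2) * integral {\<bar>x\<bar>..} (\<lambda>t. exp (- t) / t)"

end

theory Submission
  imports Defs
begin

lemma exp_nn: "(\<integral>\<^sup>+t. ennreal (exp (- t)) * indicator {0..} t \<partial>lborel) = 1"
proof -
  have "((\<lambda>x::real. exp (-1*x)) has_integral exp (-1*0)/1) {0..}"
    by (rule has_integral_exp_minus_to_infinity) simp
  hence "((\<lambda>x::real. exp (-x)) has_integral 1) {0..}" by simp
  from nn_integral_has_integral_lebesgue'[OF _ this] show ?thesis by simp
qed

lemma K_eq:
  fixes a :: real assumes a: "a > 0"
  shows "(\<integral>\<^sup>+t. ennreal (indicator {a..} t * (exp (- t) / t) / 2) \<partial>lborel)
         = ennreal (integral {a..} (\<lambda>t. exp (- t) / t) / 2)"
proof -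
  define g where "g t = indicator {a..} t * (exp (- t) / t) / 2" for t :: real
  have gm: "g \<in> borel_measurable borel" unfolding g_def by measurable
  have gnn: "\<And>t. 0 \<le> g t" using a by (auto simp: g_def indicator_def)
  have "(\<integral>\<^sup>+t. ennreal (g t) \<partial>lborel) \<le> (\<integral>\<^sup>+t. ennreal (1/(2*a)) * (ennreal (exp (- t)) * indicator {0..} t) \<partial>lborel)"
  proof (rule nn_integral_mono)
    fix t :: real
    show "ennreal (g t) \<le> ennreal (1/(2*a)) * (ennreal (exp (- t)) * indicator {0..} t)"
    proof (cases "t \<ge> a")
      case True
      hence "g t \<le> 1/(2*a) * exp (-t)" using a
        by (auto simp: g_def field_simps mult_left_mono)
      thus ?thesis using True a by (simp add: ennreal_mult[symmetric] ennreal_leI)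
    next
      case False thus ?thesis by (simp add: g_def)
    qed
  qed
  also have "\<dots> = ennreal (1/(2*a))" by (simp add: nn_integral_cmult exp_nn)
  finally have le: "(\<integral>\<^sup>+t. ennreal (g t) \<partial>lborel) \<le> ennreal (1/(2*a))" .
  have fin: "(\<integral>\<^sup>+t. ennreal (g t) \<partial>lborel) < \<infinity>"
    using order.strict_trans1[OF le ennreal_less_top] by simp
  have "(\<integral>\<^sup>+t. ennreal (g t) \<partial>lborel) = integral UNIV g"
    by (rule nn_integral_lborel_eq_integral[OF gm gnn fin])
  also have "integral UNIV g = integral UNIV (\<lambda>t. if t \<in> {a..} then exp (- t) / t / 2 else 0)"
    by (rule arg_cong[where f="integral UNIV"]) (auto simp: g_def)
  also have "\<dots> = integral {a..} (\<lambda>t. exp (- t) / t / 2)" by (rule integral_restrict_UNIV)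
  also have "\<dots> = integral {a..} (\<lambda>t. exp (- t) / t) / 2" by (rule integral_divide)
  finally show ?thesis by (simp add: g_def)
qed

definition KK :: "real \<Rightarrow> ennreal" where
  "KK x = (\<integral>\<^sup>+t. ennreal (if \<bar>x\<bar> \<le> t then exp (- t) / t / 2 else 0) \<partial>lborel)"

lemma E_KK: assumes "x \<noteq> 0" shows "ennreal (E x) = KK x"
proof -
  have "KK x = (\<integral>\<^sup>+t. ennreal (indicator {\<bar>x\<bar>..} t * (exp (- t) / t) / 2) \<partial>lborel)"
    unfolding KK_def by (rule nn_integral_cong) (simp add: indicator_def)
  also have "\<dots> = ennreal (integral {\<bar>x\<bar>..} (\<lambda>t. exp (- t) / t) / 2)"
    using assms by (intro K_eq) simp
  finally show ?thesis by (simp add: E_def)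
qed

lemma E_nonneg: "0 \<le> E x"
proof (cases "x = 0")
  case False
  have "0 \<le> integral {\<bar>x\<bar>..} (\<lambda>t. exp (- t) / t) / 2"
  proof -
    have "ennreal (integral {\<bar>x\<bar>..} (\<lambda>t. exp (- t) / t) / 2) = ennreal (E x)"
      by (simp add: E_def)
    show ?thesis
    proof (cases "(\<lambda>t. exp (- t) / t) integrable_on {\<bar>x\<bar>..}")
      case True
      have "0 \<le> integral {\<bar>x\<bar>..} (\<lambda>t. exp (- t) / t)"
        by (rule integral_nonneg[OF True]) (use False in auto)
      thus ?thesis by simp
    next
      case nI: False thus ?thesis by (simp add: not_integrable_integral)
    qed
  qed
  thus ?thesis by (simp add: E_def)
next
  case True
  show ?thesis
  proof (cases "(\<lambda>t. exp (- t) / t) integrable_on {\<bar>x\<bar>..}")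
    case I: True
    have "0 \<le> integral {\<bar>x\<bar>..} (\<lambda>t. exp (- t) / t)"
      by (rule integral_nonneg[OF I]) (use True in auto)
    thus ?thesis by (simp add: E_def)
  next
    case nI: False thus ?thesis by (simp add: not_integrable_integral E_def)
  qed
qed

lemma KK_meas: "KK \<in> borel_measurable borel"
  unfolding KK_def by measurable

lemma KK_total: "(\<integral>\<^sup>+x. KK x \<partial>lborel) = 1"
proof -
  have m: "(\<lambda>(x::real, t::real). ennreal (if \<bar>x\<bar> \<le> t then exp (- t) / t / 2 else 0))
            \<in> borel_measurable (lborel \<Otimes>\<^sub>M lborel)" by measurable
  have "(\<integral>\<^sup>+x. KK x \<partial>lborel) = (\<integral>\<^sup>+t. (\<integral>\<^sup>+x. ennreal (if \<bar>x\<bar> \<le> t then exp (- t) / t / 2 else 0) \<partial>lborel) \<partial>lborel)"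
    unfolding KK_def using lborel_pair.Fubini'[OF m] by simp
  also have "\<dots> = (\<integral>\<^sup>+t. ennreal (exp (- t)) * indicator {0..} t \<partial>lborel)"
  proof (rule nn_integral_cong_AE)
    show "AE t in lborel. (\<integral>\<^sup>+x. ennreal (if \<bar>x\<bar> \<le> t then exp (- t) / t / 2 else 0) \<partial>lborel)
            = ennreal (exp (- t)) * indicator {0..} t"
      using AE_lborel_singleton[of 0]
    proof eventually_elim
      case (elim t)
      have "(\<integral>\<^sup>+x. ennreal (if \<bar>x\<bar> \<le> t then exp (- t) / t / 2 else 0) \<partial>lborel)
            = (\<integral>\<^sup>+x. ennreal (exp (- t) / t / 2) * indicator {-t..t} x \<partial>lborel)"
        by (rule nn_integral_cong) (auto simp: indicator_def abs_le_iff)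
      also have "\<dots> = ennreal (exp (- t) / t / 2) * emeasure lborel {-t..t}"
        by (rule nn_integral_cmult_indicator) simp
      also have "\<dots> = ennreal (exp (- t)) * indicator {0..} t"
      proof (cases "t > 0")
        case True
        hence "ennreal (exp (- t) / t / 2) * emeasure lborel {-t..t} = ennreal (exp (- t) / t / 2) * ennreal (2 * t)"
          by simp
        also have "\<dots> = ennreal (exp (- t) / t / 2 * (2 * t))"
          by (rule ennreal_mult[symmetric]) (use True in auto)
        also have "exp (- t) / t / 2 * (2 * t) = exp (- t)" using True by (simp add: field_simps)
        finally show ?thesis using True by simp
      next
        case False
        with elim have "t < 0" by simp
        thus ?thesis by simp
      qed
      finally show ?case .
    qed
  qed
  also have "\<dots> = 1" by (rule exp_nn)
  finally show ?thesis .
qed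

lemma E_shift_int: "((\<lambda>\<eta>. E (y - \<eta>)) has_integral 1) UNIV"
proof -
  define G where "G x = enn2real (KK x)" for x
  have Gm: "G \<in> borel_measurable borel" unfolding G_def using KK_meas by measurable
  have GE: "G x = E x" if "x \<noteq> 0" for x
    using E_KK[OF that] E_nonneg[of x] by (simp add: G_def flip: E_KK[OF that])
  have "(\<integral>\<^sup>+x. ennreal (G x) \<partial>lborel) = (\<integral>\<^sup>+x. KK x \<partial>lborel)"
  proof (rule nn_integral_cong_AE)
    show "AE x in lborel. ennreal (G x) = KK x"
      using AE_lborel_singleton[of 0] by eventually_elim (simp add: GE E_KK)
  qed
  also have "\<dots> = 1" by (rule KK_total)
  finally have G1: "(\<integral>\<^sup>+x. ennreal (G x) \<partial>lborel) = 1" .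
  have "(\<integral>\<^sup>+x. ennreal (G x) \<partial>lborel) = ennreal \<bar>-1\<bar> * (\<integral>\<^sup>+x. ennreal (G (y + (-1) * x)) \<partial>lborel)"
    by (rule nn_integral_real_affine) (use Gm in auto)
  hence G2: "(\<integral>\<^sup>+x. ennreal (G (y - x)) \<partial>lborel) = ennreal 1" using G1 by simp
  have Gnn: "0 \<le> G x" for x by (simp add: G_def)
  have "((\<lambda>x. G (y - x)) has_integral 1) UNIV"
  proof (rule nn_integral_has_integral[OF _ _ G2])
    show "(\<lambda>x. G (y - x)) \<in> borel_measurable borel" using Gm by measurable
  qed (auto simp: Gnn)
  thus ?thesis
    by (rule has_integral_spike[OF negligible_sing[of y], rotated]) (simp add: GE)
qed

lemma conv_int:
  fixes g :: "real \<Rightarrow> real"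
  assumes gc: "continuous_on UNIV g" and gb: "bounded (range g)"
  shows "(\<lambda>\<eta>. E (y - \<eta>) * g \<eta>) integrable_on UNIV"
proof -
  have Ei: "(\<lambda>\<eta>. E (y - \<eta>)) absolutely_integrable_on UNIV"
    by (rule nonnegative_absolutely_integrable_1) (use E_shift_int E_nonneg in auto)
  have "(\<lambda>\<eta>. g \<eta> * E (y - \<eta>)) absolutely_integrable_on UNIV"
    by (rule absolutely_integrable_bounded_measurable_product_real[OF _ _ gb Ei])
       (use continuous_imp_measurable_on_sets_lebesgue[OF gc] in auto)
  hence "(\<lambda>\<eta>. g \<eta> * E (y - \<eta>)) integrable_on UNIV"
    using absolutely_integrable_on_def by blast
  thus ?thesis by (simp add: mult.commute)
qed

lemma E_lower:
  assumes x: "x \<noteq> 0" and R: "\<bar>x\<bar> \<le> R"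
  shows "exp (- (R + 1)) / (R + 1) / 2 \<le> E x"
proof -
  define c0 where "c0 = exp (- (R + 1)) / (R + 1) / 2"
  have Rp: "R > 0" using x R by linarith
  have c0nn: "0 \<le> c0" using Rp by (simp add: c0_def)
  have "ennreal c0 = (\<integral>\<^sup>+t. ennreal c0 * indicator {R..R+1} t \<partial>lborel)"
    by (subst nn_integral_cmult_indicator) auto
  also have "\<dots> \<le> KK x" unfolding KK_def
  proof (rule nn_integral_mono)
    fix t :: real
    show "ennreal c0 * indicator {R..R+1} t \<le> ennreal (if \<bar>x\<bar> \<le> t then exp (- t) / t / 2 else 0)"
    proof (cases "t \<in> {R..R+1}")
      case True
      hence t: "R \<le> t" "t \<le> R + 1" by auto
      have "exp (- (R + 1)) / (R + 1) \<le> exp (- t) / t"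
        by (rule frac_le) (use t Rp in auto)
      hence "exp (- (R + 1)) / (R + 1) / 2 \<le> exp (- t) / t / 2" by (rule divide_right_mono) simp
      hence "c0 \<le> exp (- t) / t / 2" unfolding c0_def .
      thus ?thesis using True t R by (simp add: ennreal_leI)
    qed simp
  qed
  also have "\<dots> = ennreal (E x)" using E_KK[OF x] by simp
  finally show ?thesis using E_nonneg[of x] by (simp add: c0_def)
qed

lemma conv_pos:
  fixes g :: "real \<Rightarrow> real"
  assumes gc: "continuous_on UNIV g" and gnn: "\<And>\<eta>. 0 \<le> g \<eta>" and gp: "g y1 > 0"
    and ne: "y1 \<noteq> y0"
    and gi: "(\<lambda>\<eta>. E (y0 - \<eta>) * g \<eta>) integrable_on UNIV"
  shows "0 < integral UNIV (\<lambda>\<eta>. E (y0 - \<eta>) * g \<eta>)"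
proof -
  have "isCont g y1" using gc by (simp add: continuous_on_eq_continuous_at)
  then obtain d where d: "d > 0" "\<And>\<eta>. dist \<eta> y1 < d \<Longrightarrow> dist (g \<eta>) (g y1) < g y1 / 2"
    using gp unfolding continuous_at_eps_delta by (meson half_gt_zero)
  define r where "r = min d \<bar>y1 - y0\<bar> / 2"
  have r1: "r \<le> d/2" "r \<le> \<bar>y1 - y0\<bar>/2" "r > 0" using d ne unfolding r_def by auto
  have r: "r > 0" "r < d" "r < \<bar>y1 - y0\<bar>" using r1 d ne by auto
  define R where "R = 2 * \<bar>y1 - y0\<bar> + 1"
  define e0 where "e0 = exp (- (R + 1)) / (R + 1) / 2"
  have e0: "e0 > 0" by (simp add: e0_def R_def add_pos_nonneg)
  define C where "C = e0 * (g y1 / 2)"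
  have Cp: "C > 0" using e0 gp by (simp add: C_def)
  have low: "(if \<eta> \<in> {y1-r..y1+r} then C else 0) \<le> E (y0 - \<eta>) * g \<eta>" for \<eta>
  proof (cases "\<eta> \<in> {y1-r..y1+r}")
    case True
    hence h: "\<bar>\<eta> - y1\<bar> \<le> r" by auto
    have "dist (g \<eta>) (g y1) < g y1 / 2" using d(2)[of \<eta>] h r by (simp add: dist_real_def)
    hence g1: "g y1 / 2 \<le> g \<eta>" unfolding dist_real_def by (auto simp: abs_if split: if_splits)
    have nz: "y0 - \<eta> \<noteq> 0" using h r by auto
    have "\<bar>y0 - \<eta>\<bar> \<le> R" using h r by (auto simp: R_def abs_if split: if_splits)
    hence e1: "e0 \<le> E (y0 - \<eta>)" using E_lower[OF nz] by (simp add: e0_def)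
    have "C \<le> E (y0 - \<eta>) * g \<eta>" unfolding C_def
      by (rule mult_mono[OF e1 g1]) (use e0 gnn[of \<eta>] gnn[of y1] E_nonneg[of "y0 - \<eta>"] in auto)
    thus ?thesis using True by simp
  next
    case False
    have "0 \<le> E (y0 - \<eta>) * g \<eta>" using E_nonneg gnn by simp
    thus ?thesis by (simp only: if_not_P[OF False])
  qed
  have hi: "((\<lambda>\<eta>. if \<eta> \<in> {y1-r..y1+r} then C else 0) has_integral (2 * r) * C) UNIV"
  proof -
    have "((\<lambda>x. C) has_integral (2 * r) * C) {y1-r..y1+r}"
      using has_integral_const_real[of C "y1-r" "y1+r"] r by simp
    thus ?thesis by (simp only: has_integral_restrict_UNIV)
  qed
  have "(2 * r) * C \<le> integral UNIV (\<lambda>\<eta>. E (y0 - \<eta>) * g \<eta>)"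
    by (rule has_integral_le[OF hi integrable_integral[OF gi]]) (rule low)
  moreover have "0 < (2 * r) * C" using r Cp by simp
  ultimately show ?thesis by linarith
qed

lemma second_deriv_max:
  fixes f f' f'' :: "real \<Rightarrow> real"
  assumes d1: "\<And>y. (f has_real_derivative f' y) (at y)"
    and d2: "\<And>y. (f' has_real_derivative f'' y) (at y)"
    and mx: "\<And>y. f y \<le> f y0"
  shows "f' y0 = 0" "f'' y0 \<le> 0"
proof -
  show f0: "f' y0 = 0"
    by (rule DERIV_local_max[OF d1, of 1]) (use mx in auto)
  show "f'' y0 \<le> 0"
  proof (rule ccontr)
    assume "\<not> f'' y0 \<le> 0"
    hence "0 < f'' y0" by simp
    from DERIV_pos_inc_right[OF d2 this] obtain d where d: "d > 0"
      "\<And>h. h > 0 \<Longrightarrow> h < d \<Longrightarrow> f' y0 < f' (y0 + h)" by blast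
    have "y0 < y0 + d/2" using d by simp
    from MVT2[OF this d1] obtain z where z: "y0 < z" "z < y0 + d/2"
      "f (y0 + d/2) - f y0 = (y0 + d/2 - y0) * f' z" by blast
    have "f' y0 < f' (y0 + (z - y0))" using z d by (intro d(2)) auto
    hence "0 < f' z" using f0 by simp
    hence "0 < (y0 + d/2 - y0) * f' z" using d by simp
    hence "0 < f (y0 + d/2) - f y0" using z(3) by linarith
    thus False using mx[of "y0 + d/2"] by simp
  qed
qed

lemma bnd_diff:
  fixes h :: "real \<Rightarrow> real" and a b B :: real
  assumes hb: "\<And>x. 0 \<le> h x \<and> h x \<le> B"
  shows "bounded (range (\<lambda>x. a * h x + b))"
proof -
  have "norm (a * h x + b) \<le> \<bar>a\<bar> * B + \<bar>b\<bar>" for x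
  proof -
    have "\<bar>a * h x\<bar> \<le> \<bar>a\<bar> * B" using hb[of x] by (simp add: abs_mult mult_left_mono)
    thus ?thesis by simp
  qed
  thus ?thesis unfolding bounded_iff by blast
qed

theorem lemma3p1:
  fixes c lam T_M :: real and f f' f'' :: "real \<Rightarrow> real"
  assumes c_pos: "c > 0"
    and lam_pos: "0 < lam" and lam_le: "lam \<le> T_M"
    and d1: "\<And>y. (f has_real_derivative f' y) (at y)"
    and d2: "\<And>y. (f' has_real_derivative f'' y) (at y)"
    and cont2: "continuous_on UNIV f''"
    and eqn: "\<And>y. f'' y - c * f' y - f y ^ 4
                  = - integral UNIV (\<lambda>\<eta>. E (y - \<eta>) * f \<eta> ^ 4)"
    and bounds: "\<And>y. lam \<le> f y \<and> f y \<le> T_M"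
  shows "(\<exists>k. \<forall>y. f y = k) \<or>
         ((\<nexists>y0. \<forall>y. f y \<le> f y0) \<and> (\<nexists>y0. \<forall>y. f y0 \<le> f y))"
proof (cases "\<exists>k. \<forall>y. f y = k")
  case True thus ?thesis by blast
next
  case False
  hence nc: "\<not> (\<exists>k. \<forall>y. f y = k)" .
  have fc: "continuous_on UNIV f"
    using d1 by (meson DERIV_isCont continuous_at_imp_continuous_on)
  have f4c: "continuous_on UNIV (\<lambda>x. f x ^ 4)" using fc by (intro continuous_intros)
  have f4b: "0 \<le> f x ^ 4 \<and> f x ^ 4 \<le> T_M ^ 4" for x
    using bounds[of x] lam_pos by (auto intro: power_mono)
  have Eint: "(\<lambda>\<eta>. E (y - \<eta>)) integrable_on UNIV" for y
    using E_shift_int by blast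
  have E1: "integral UNIV (\<lambda>\<eta>. E (y - \<eta>)) = 1" for y
    using E_shift_int by (rule integral_unique)
  have EFint: "(\<lambda>\<eta>. E (y - \<eta>) * f \<eta> ^ 4) integrable_on UNIV" for y
    using conv_int[OF f4c, of y] bnd_diff[OF f4b, where a=1 and b=0] by simp
  have key: "integral UNIV (\<lambda>\<eta>. E (y - \<eta>) * (a * f \<eta> ^ 4 + b))
      = a * integral UNIV (\<lambda>\<eta>. E (y - \<eta>) * f \<eta> ^ 4) + b" for a b y
  proof -
    have "integral UNIV (\<lambda>\<eta>. E (y - \<eta>) * (a * f \<eta> ^ 4 + b))
        = integral UNIV (\<lambda>\<eta>. a * (E (y - \<eta>) * f \<eta> ^ 4) + b * E (y - \<eta>))"
      by (simp add: algebra_simps)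
    also have "\<dots> = integral UNIV (\<lambda>\<eta>. a * (E (y - \<eta>) * f \<eta> ^ 4)) + integral UNIV (\<lambda>\<eta>. b * E (y - \<eta>))"
      using integrable_on_cmult_left[OF EFint[of y], of a] integrable_on_cmult_left[OF Eint[of y], of b]
      by (intro integral_add) simp_all
    also have "\<dots> = a * integral UNIV (\<lambda>\<eta>. E (y - \<eta>) * f \<eta> ^ 4) + b"
      by (simp add: E1)
    finally show ?thesis .
  qed
  have gint: "(\<lambda>\<eta>. E (y - \<eta>) * (a * f \<eta> ^ 4 + b)) integrable_on UNIV" for a b y
    by (rule conv_int[OF _ bnd_diff[OF f4b]]) (use fc in \<open>intro continuous_intros\<close>)
  have gcont: "continuous_on UNIV (\<lambda>\<eta>. a * f \<eta> ^ 4 + b)" for a b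
    using fc by (intro continuous_intros)
  have "(\<nexists>y0. \<forall>y. f y \<le> f y0) \<and> (\<nexists>y0. \<forall>y. f y0 \<le> f y)"
  proof (intro conjI notI)
    assume "\<exists>y0. \<forall>y. f y \<le> f y0"
    then obtain y0 where mx: "\<And>y. f y \<le> f y0" by blast
    obtain y1 where y1: "f y1 \<noteq> f y0" using nc by blast
    have lt: "f y1 < f y0" using mx[of y1] y1 by simp
    have ne: "y1 \<noteq> y0" using y1 by auto
    note sd = second_deriv_max[OF d1 d2 mx]
    have I: "integral UNIV (\<lambda>\<eta>. E (y0 - \<eta>) * f \<eta> ^ 4) = f y0 ^ 4 - f'' y0"
      using eqn[of y0] sd(1) by simp
    have gnn: "0 \<le> (-1) * f \<eta> ^ 4 + f y0 ^ 4" for \<eta>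
      using mx[of \<eta>] bounds[of \<eta>] lam_pos by (simp add: power_mono)
    have gp: "0 < (-1) * f y1 ^ 4 + f y0 ^ 4"
      using lt bounds[of y1] lam_pos by (simp add: power_strict_mono)
    have "0 < integral UNIV (\<lambda>\<eta>. E (y0 - \<eta>) * ((-1) * f \<eta> ^ 4 + f y0 ^ 4))"
      by (rule conv_pos[OF gcont gnn gp ne gint])
    also have "\<dots> = f'' y0" by (simp only: key I) simp
    finally show False using sd(2) by simp
  next
    assume "\<exists>y0. \<forall>y. f y0 \<le> f y"
    then obtain y0 where mn: "\<And>y. f y0 \<le> f y" by blast
    obtain y1 where y1: "f y1 \<noteq> f y0" using nc by blast
    have lt: "f y0 < f y1" using mn[of y1] y1 by simp
    have ne: "y1 \<noteq> y0" using y1 by auto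
    have n1: "((\<lambda>x. - f x) has_real_derivative - f' y) (at y)" for y
      using d1 by (intro derivative_intros)
    have n2: "((\<lambda>x. - f' x) has_real_derivative - f'' y) (at y)" for y
      using d2 by (intro derivative_intros)
    have nm: "- f y \<le> - f y0" for y using mn[of y] by simp
    note sd = second_deriv_max[of "\<lambda>x. - f x" "\<lambda>x. - f' x", OF n1 n2 nm]
    have I: "integral UNIV (\<lambda>\<eta>. E (y0 - \<eta>) * f \<eta> ^ 4) = f y0 ^ 4 - f'' y0"
      using eqn[of y0] sd(1) by simp
    have gnn: "0 \<le> 1 * f \<eta> ^ 4 + (- (f y0 ^ 4))" for \<eta>
      using mn[of \<eta>] bounds[of y0] lam_pos by (simp add: power_mono)
    have gp: "0 < 1 * f y1 ^ 4 + (- (f y0 ^ 4))"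
      using lt bounds[of y0] lam_pos by (simp add: power_strict_mono)
    have "0 < integral UNIV (\<lambda>\<eta>. E (y0 - \<eta>) * (1 * f \<eta> ^ 4 + (- (f y0 ^ 4))))"
      by (rule conv_pos[OF gcont gnn gp ne gint])
    also have "\<dots> = - f'' y0" by (simp only: key I) simp
    finally show False using sd(2) by simp
  qed
  thus ?thesis by blast
qed

end
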